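(* Let $H$ be a digraph (possibly with loops), let $D$ be an $H$-colored quasi-transitive digraph, let $k \geq 4$, and let $u,v$ be distinct vertices of $D$. If there exists a directed $uv$-walk in $D$, then either $u$ and $v$ are adjacent in $D$, or $(v,u)$ is a symmetric arc of $C_{H}^{k-1}(D)$ (that is, both $(u,v)$ and $(v,u)$ are arcs of $C_{H}^{k-1}(D)$).
   Context: All digraphs are finite. A digraph $D$ is quasi-transitive if for all distinct $u,v\in V(D)$, whenever there is a directed $uv$-path of length $2$, $u$ and $v$ are joined by an arc (in some direction). Two vertices are adjacent if there is an arc between them. $D$ has no loops and comes with a map $\rho: A(D)\to V(H)$. For a walk $W=(x_0,\ldots,x_n)$ in $D$, there is an obstruction on $x_i$ if $(\rho(x_{i-1},x_i),\rho(x_i,x_{i+1})) \notin A(H)$; for an open walk this is considered at internal vertices $x_i$, $1\le i\le n-1$, for a closed walk at all $i\in\{0,\ldots,n-1\}$ with indices modulo $n$. $O_H(W)$ is the set of indices with an obstruction; the $H$-length is $l_H(W)=|O_H(W)|+1$ for open $W$ and $|O_H(W)|$ for closed $W$. The $(k-1,H)$-closure $C_H^{k-1}(D)$ is the digraph on $V(D)$ in which $(x,y)$ is an arc iff there is a directed $xy$-path in $D$ of $H$-length at most $k-1$. *)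

theory Defs
  imports Main
begin

definition digraph :: "'a set \<Rightarrow> ('a \<times> 'a) set \<Rightarrow> bool" where
  "digraph V A \<longleftrightarrow> finite V \<and> A \<subseteq> V \<times> V"

definition loopless :: "('a \<times> 'a) set \<Rightarrow> bool" where
  "loopless A \<longleftrightarrow> (\<forall>x. (x, x) \<notin> A)"

definition H_colored :: "('a \<times> 'a) set \<Rightarrow> 'c set \<Rightarrow> (('a \<times> 'a) \<Rightarrow> 'c) \<Rightarrow> bool" where
  "H_colored A VH rho \<longleftrightarrow> (\<forall>e\<in>A. rho e \<in> VH)"

definition quasi_transitive :: "'a set \<Rightarrow> ('a \<times> 'a) set \<Rightarrow> bool" where
  "quasi_transitive V A \<longleftrightarrow>
     (\<forall>u\<in>V. \<forall>v\<in>V. \<forall>w\<in>V. u \<noteq> v \<and> u \<noteq> w \<and> w \<noteq> v \<and> (u, w) \<in> A \<and> (w, v) \<in> A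
        \<longrightarrow> (u, v) \<in> A \<or> (v, u) \<in> A)"

definition adjacent :: "('a \<times> 'a) set \<Rightarrow> 'a \<Rightarrow> 'a \<Rightarrow> bool" where
  "adjacent A u v \<longleftrightarrow> (u, v) \<in> A \<or> (v, u) \<in> A"

definition dwalk :: "('a \<times> 'a) set \<Rightarrow> 'a list \<Rightarrow> bool" where
  "dwalk A xs \<longleftrightarrow> xs \<noteq> [] \<and> (\<forall>i. Suc i < length xs \<longrightarrow> (xs ! i, xs ! Suc i) \<in> A)"

definition dpath :: "('a \<times> 'a) set \<Rightarrow> 'a list \<Rightarrow> bool" where
  "dpath A xs \<longleftrightarrow> dwalk A xs \<and> distinct xs"

definition obstructions :: "('c \<times> 'c) set \<Rightarrow> (('a \<times> 'a) \<Rightarrow> 'c) \<Rightarrow> 'a list \<Rightarrow> nat set" where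
  "obstructions AH rho xs = {i. 1 \<le> i \<and> Suc i < length xs \<and>
      (rho (xs ! (i - 1), xs ! i), rho (xs ! i, xs ! Suc i)) \<notin> AH}"

definition H_length :: "('c \<times> 'c) set \<Rightarrow> (('a \<times> 'a) \<Rightarrow> 'c) \<Rightarrow> 'a list \<Rightarrow> nat" where
  "H_length AH rho xs = card (obstructions AH rho xs) + 1"

text \<open>Arc (x,y) of the (k-1,H)-closure C_H^{k-1}(D): there is a directed xy-path
 in D (with at least one arc) of H-length at most k-1.\<close>
definition closure_arc ::
  "('a \<times> 'a) set \<Rightarrow> ('c \<times> 'c) set \<Rightarrow> (('a \<times> 'a) \<Rightarrow> 'c) \<Rightarrow> nat \<Rightarrow> 'a \<Rightarrow> 'a \<Rightarrow> bool" where
  "closure_arc A AH rho k x y \<longleftrightarrow>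
     (\<exists>p. dpath A p \<and> length p \<ge> 2 \<and> hd p = x \<and> last p = y \<and> H_length AH rho p \<le> k - 1)"

end

theory Submission
  imports Defs
begin

definition fw :: "('a \<times> 'a) set \<Rightarrow> 'a \<Rightarrow> 'a \<Rightarrow> (nat \<Rightarrow> 'a) \<Rightarrow> nat \<Rightarrow> bool" where
  "fw A u v f n \<longleftrightarrow> f 0 = u \<and> f n = v \<and> (\<forall>i<n. (f i, f (Suc i)) \<in> A)"

lemma fw_short:
  assumes "fw A u v f n" "i + 2 \<le> j" "j \<le> n" "(f i, f j) \<in> A"
  shows "\<exists>g m. m < n \<and> fw A u v g m"
proof -
  define g where "g = (\<lambda>t. if t \<le> i then f t else f (t + (j - i - 1)))"
  have "fw A u v g (n - (j - i - 1))"
    unfolding fw_def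
  proof (intro conjI allI impI)
    show "g 0 = u" using assms(1) by (simp add: g_def fw_def)
    show "g (n - (j - i - 1)) = v" using assms by (auto simp: g_def fw_def)
    fix t assume t: "t < n - (j - i - 1)"
    show "(g t, g (Suc t)) \<in> A"
    proof (cases "t < i")
      case True then show ?thesis using assms t by (auto simp: g_def fw_def)
    next
      case False
      show ?thesis
      proof (cases "t = i")
        case True
        have "Suc i + (j - i - 1) = j" using assms by simp
        then show ?thesis using True assms by (auto simp: g_def)
      next
        case False
        then have "t > i" using \<open>\<not> t < i\<close> by simp
        then show ?thesis using assms t by (auto simp: g_def fw_def)
      qed
    qed
  qed
  moreover have "n - (j - i - 1) < n" using assms by simp
  ultimately show ?thesis by blast
qed

lemma fw_dist:
  assumes "fw A u v f n" "i < j" "j \<le> n" "f i = f j"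
  shows "\<exists>g m. m < n \<and> fw A u v g m"
proof -
  define g where "g = (\<lambda>t. if t \<le> i then f t else f (t + (j - i)))"
  have "fw A u v g (n - (j - i))"
    unfolding fw_def
  proof (intro conjI allI impI)
    show "g 0 = u" using assms(1) by (simp add: g_def fw_def)
    show "g (n - (j - i)) = v"
    proof (cases "j = n")
      case True then show ?thesis using assms by (simp add: g_def fw_def)
    next
      case False
      then have "n - (j - i) > i" "n - (j - i) + (j - i) = n" using assms by auto
      then show ?thesis using assms by (simp add: g_def fw_def)
    qed
    fix t assume t: "t < n - (j - i)"
    show "(g t, g (Suc t)) \<in> A"
    proof (cases "t < i")
      case True then show ?thesis using assms t by (auto simp: g_def fw_def)
    next
      case False
      show ?thesis
      proof (cases "t = i")
        case True
        have "(f j, f (Suc j)) \<in> A" using assms t True unfolding fw_def by auto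
        moreover have "Suc i + (j - i) = Suc j" using assms by simp
        ultimately show ?thesis using True assms by (auto simp: g_def)
      next
        case False
        then have "t > i" using \<open>\<not> t < i\<close> by simp
        then show ?thesis using assms t by (auto simp: g_def fw_def)
      qed
    qed
  qed
  moreover have "n - (j - i) < n" using assms by simp
  ultimately show ?thesis by blast
qed

lemma struct:
  assumes dg: "digraph V A" and ll: "loopless A" and qt: "quasi_transitive V A"
    and uv: "u \<noteq> v" and na: "\<not> adjacent A u v"
    and ex: "fw A u v f0 n0"
  shows "\<exists>a b. (u,a) \<in> A \<and> (a,b) \<in> A \<and> (b,v) \<in> A \<and> (v,a) \<in> A \<and> (b,u) \<in> A"
proof -
  have qt2: "adjacent A x z" if "(x,y) \<in> A" "(y,z) \<in> A" "x \<noteq> z" for x y z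
  proof -
    have "x \<noteq> y" "y \<noteq> z" using that ll unfolding loopless_def by auto
    moreover have "x \<in> V" "y \<in> V" "z \<in> V" using that dg unfolding digraph_def by auto
    ultimately show ?thesis using qt that unfolding quasi_transitive_def adjacent_def by blast
  qed
  define n where "n = (LEAST m. \<exists>f. fw A u v f m)"
  have "\<exists>f. fw A u v f n" unfolding n_def by (rule LeastI_ex) (use ex in blast)
  then obtain f where f: "fw A u v f n" by blast
  have minl: "\<not> (\<exists>g. fw A u v g m)" if "m < n" for m
    using that unfolding n_def using not_less_Least by blast
  have nosh: "(f i, f j) \<notin> A" if "i + 2 \<le> j" "j \<le> n" for i j
    using fw_short[OF f that] minl by blast
  have dist: "f i \<noteq> f j" if "i < j" "j \<le> n" for i j
    using fw_dist[OF f that] minl by blast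
  have arc: "(f i, f (Suc i)) \<in> A" if "i < n" for i using f that unfolding fw_def by auto
  have bk: "(f j, f i) \<in> A" if "i + 2 \<le> j" "j \<le> n" "adjacent A (f i) (f j)" for i j
    using nosh[OF that(1,2)] that(3) unfolding adjacent_def by blast
  have d2: "(f (i+2), f i) \<in> A" if "i + 2 \<le> n" for i
  proof -
    have "adjacent A (f i) (f (i+2))"
      using qt2[OF arc arc, of i] dist[of i "i+2"] that by simp
    then show ?thesis using bk[of i "i+2"] that by simp
  qed
  have f0: "f 0 = u" and fn: "f n = v" using f unfolding fw_def by auto
  have n1: "n \<noteq> 0" using f0 fn uv by (cases n) auto
  have n2: "n \<noteq> 1" using arc[of 0] f0 fn na unfolding adjacent_def by auto
  have n3: "n \<noteq> 2" using d2[of 0] f0 fn na unfolding adjacent_def by (auto simp: numeral_2_eq_2)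
  show ?thesis
  proof (cases "n = 3")
    case True
    show ?thesis
      apply (rule exI[of _ "f 1"], rule exI[of _ "f 2"])
      using arc[of 0] arc[of 1] arc[of 2] d2[of 0] d2[of 1] True f0 fn
      by (simp add: numeral_2_eq_2 numeral_3_eq_3)
  next
    case False
    then have n4: "n \<ge> 4" using n1 n2 n3 by simp
    have d4: "(f (i+4), f i) \<in> A" if "i + 4 \<le> n" for i
    proof -
      have x1: "(f (i+4), f (i+2)) \<in> A" using d2[of "i+2"] that by (simp add: eval_nat_numeral)
      have x2: "(f (i+2), f i) \<in> A" using d2[of i] that by simp
      have "f (i+4) \<noteq> f i" using dist[of i "i+4"] that by simp
      then have "adjacent A (f (i+4)) (f i)" by (rule qt2[OF x1 x2])
      then have "adjacent A (f i) (f (i+4))" unfolding adjacent_def by blast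
      then show ?thesis using bk[of i "i+4"] that by simp
    qed
    have d3: "(f (i+3), f i) \<in> A" if "i + 3 \<le> n" for i
    proof (cases "i + 4 \<le> n")
      case True
      have x1: "(f (i+3), f (i+4)) \<in> A" using arc[of "i+3"] True by (simp add: eval_nat_numeral)
      have x2: "(f (i+4), f i) \<in> A" using d4[of i] True by simp
      have "f (i+3) \<noteq> f i" using dist[of i "i+3"] that by simp
      then have "adjacent A (f (i+3)) (f i)" by (rule qt2[OF x1 x2])
      then have "adjacent A (f i) (f (i+3))" unfolding adjacent_def by blast
      then show ?thesis using bk[of i "i+3"] that by simp
    next
      case False
      then have i1: "i \<ge> 1" using n4 that by simp
      have e: "f (i - 1 + 4) = f (i + 3)" "Suc (i - 1) = i" using i1 by (simp_all add: add.commute)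
      have "(f (i+3), f (i-1)) \<in> A" using d4[of "i-1"] e that by simp
      moreover have "(f (i-1), f i) \<in> A" using arc[of "i-1"] e that by simp
      moreover have "f (i+3) \<noteq> f i" using dist[of i "i+3"] that by simp
      ultimately have "adjacent A (f (i+3)) (f i)" by (rule qt2)
      then have "adjacent A (f i) (f (i+3))" unfolding adjacent_def by blast
      then show ?thesis using bk[of i "i+3"] that by simp
    qed
    have gen: "\<forall>i. d \<ge> 2 \<longrightarrow> i + d \<le> n \<longrightarrow> (f (i+d), f i) \<in> A" for d
    proof (induction d rule: less_induct)
      case (less d)
      show ?case
      proof (intro allI impI)
        fix i assume h: "2 \<le> d" "i + d \<le> n"
        show "(f (i+d), f i) \<in> A"
        proof (cases "d \<le> 3")
          case True
          then have "d = 2 \<or> d = 3" using h by auto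
          then show ?thesis using d2 d3 h by auto
        next
          case False
          have a1: "(f (i+2+(d-2)), f (i+2)) \<in> A" proof -
            have "d - 2 < d" "2 \<le> d - 2" "i + 2 + (d - 2) \<le> n" using h False by auto
            then show ?thesis using less.IH[of "d-2"] by blast
          qed
          have e: "i + 2 + (d-2) = i + d" using h by simp
          have "adjacent A (f i) (f (i+d))"
            using qt2[OF a1[unfolded e] d2[of i]] dist[of i "i+d"] h by (auto simp: adjacent_def)
          then show ?thesis using bk[of i "i+d"] h False by simp
        qed
      qed
    qed
    have "(f n, f 0) \<in> A" using gen[of n] n4 by auto
    then show ?thesis using na f0 fn unfolding adjacent_def by auto
  qed
qed

theorem lemma15:
  fixes V :: "'a set" and A :: "('a \<times> 'a) set"
    and VH :: "'c set" and AH :: "('c \<times> 'c) set"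
    and rho :: "('a \<times> 'a) \<Rightarrow> 'c" and k :: nat and u v :: 'a
  assumes "digraph V A" and "loopless A"
    and "AH \<subseteq> VH \<times> VH"
    and "H_colored A VH rho"
    and "quasi_transitive V A"
    and "k \<ge> 4"
    and "u \<in> V" and "v \<in> V" and "u \<noteq> v"
    and "\<exists>W. dwalk A W \<and> hd W = u \<and> last W = v"
  shows "adjacent A u v \<or> (closure_arc A AH rho k u v \<and> closure_arc A AH rho k v u)"
proof (cases "adjacent A u v")
  case True then show ?thesis by simp
next
  case na: False
  obtain W where W: "dwalk A W" "hd W = u" "last W = v" using assms(10) by blast
  have "fw A u v (\<lambda>i. W ! i) (length W - 1)"
    using W unfolding fw_def dwalk_def by (auto simp: hd_conv_nth last_conv_nth)
  then obtain a b where ab: "(u,a) \<in> A" "(a,b) \<in> A" "(b,v) \<in> A" "(v,a) \<in> A" "(b,u) \<in> A"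
    using struct[OF assms(1,2,5,9) na] by blast
  have ll: "(x,x) \<notin> A" for x using assms(2) unfolding loopless_def by auto
  have ds: "u \<noteq> a" "a \<noteq> b" "b \<noteq> v" "a \<noteq> v" "b \<noteq> u" "u \<noteq> v"
    using ab ll na assms(9) unfolding adjacent_def by blast+
  have hl: "H_length AH rho [x,y,z,w] \<le> 3" for x y z w
  proof -
    have "obstructions AH rho [x,y,z,w] \<subseteq> {1,2}" unfolding obstructions_def by auto
    then have "card (obstructions AH rho [x,y,z,w]) \<le> 2"
      using card_mono[of "{1,2::nat}" "obstructions AH rho [x,y,z,w]"] by simp
    then show ?thesis unfolding H_length_def by simp
  qed
  have w4: "dwalk A [x,y,z,w]" if "(x,y) \<in> A" "(y,z) \<in> A" "(z,w) \<in> A" for x y z w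
    unfolding dwalk_def
  proof (intro conjI allI impI)
    fix i assume "Suc i < length [x,y,z,w]"
    then have "i = 0 \<or> i = 1 \<or> i = 2" by auto
    then show "([x,y,z,w] ! i, [x,y,z,w] ! Suc i) \<in> A" using that by auto
  qed simp
  have p1: "dpath A [u,a,b,v]" using w4[OF ab(1,2,3)] ds unfolding dpath_def by auto
  have p2: "dpath A [v,a,b,u]" using w4[OF ab(4,2,5)] ds unfolding dpath_def by auto
  have "closure_arc A AH rho k u v" unfolding closure_arc_def
    using p1 hl[of u a b v] assms(6) by (intro exI[of _ "[u,a,b,v]"]) auto
  moreover have "closure_arc A AH rho k v u" unfolding closure_arc_def
    using p2 hl[of v a b u] assms(6) by (intro exI[of _ "[v,a,b,u]"]) auto
  ultimately show ?thesis by simp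
qed

end
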